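(* Let $\Gamma\subset\mathbf{Z}^n$ be an almost periodic pattern, $\varepsilon>0$, $\delta>0$ and $A\in GL_n(\mathbf{R})$. Then there exist $R_{\varepsilon,\delta}>0$ and a relatively dense set $\widetilde{\mathcal N}_{\varepsilon,\delta}$ such that: for all $R\ge R_{\varepsilon,\delta}$ and all $v\in\widetilde{\mathcal N}_{\varepsilon,\delta}$, $D_R^+\big((\Gamma+v)\Delta\Gamma\big)<\varepsilon$; for every $v\in\widetilde{\mathcal N}_{\varepsilon,\delta}$, $d_\infty(Av,\mathbf{Z}^n)<\delta$; and for every $i\in I_\mathbf{Q}(A)$ and every $v\in\widetilde{\mathcal N}_{\varepsilon,\delta}$, $(Av)_i\in\mathbf{Z}$.
   Context: Balls are for the sup norm: $B(x,R)=\{y:\max_i|x_i-y_i|<R\}$; $d_\infty$ is the distance induced by the sup norm. Relatively dense: there is $R_0>0$ such that every ball of radius at least $R_0$ meets the set; uniformly discrete: there is $r>0$ such that every ball of radius at most $r$ contains at most one point; Delone: both. $D_R^+(\Gamma)=\sup_{x\in\mathbf{R}^n}\frac{\operatorname{Card}(B(x,R)\cap\Gamma)}{\operatorname{Card}(B(x,R)\cap\mathbf{Z}^n)}$. A Delone set $\Gamma\subset\mathbf{Z}^n$ is an almost periodic pattern if for every $\varepsilon>0$ there exist $R_\varepsilon>0$ and a relatively dense set $\mathcal N_\varepsilon$ with $D_R^+((\Gamma+v)\Delta\Gamma)<\varepsilon$ for all $R\ge R_\varepsilon$, $v\in\mathcal N_\varepsilon$. For $A=(a_{i,j})\in GL_n(\mathbf{R})$,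 $I_\mathbf{Q}(A)$ is the set of row indices $i$ such that $a_{i,j}\in\mathbf{Q}$ for every $j\in\{1,\dots,n\}$. *)

theory Defs
  imports "HOL-Analysis.Analysis"
begin

definition Zn :: "(real^'n) set" where
  "Zn = {x. \<forall>i. x $ i \<in> \<int>}"

definition dinf :: "real^'n \<Rightarrow> real^'n \<Rightarrow> real" where
  "dinf x y = Max (range (\<lambda>i. \<bar>x $ i - y $ i\<bar>))"

definition supball :: "real^'n \<Rightarrow> real \<Rightarrow> (real^'n) set" where
  "supball x R = {y. dinf x y < R}"

definition dinf_set :: "real^'n \<Rightarrow> (real^'n) set \<Rightarrow> real" where
  "dinf_set x S = (INF y\<in>S. dinf x y)"

definition relatively_dense :: "(real^'n) set \<Rightarrow> bool" where
  "relatively_dense S \<longleftrightarrow> (\<exists>R0>0. \<forall>x R. R \<ge> R0 \<longrightarrow> supball x R \<inter> S \<noteq> {})"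

definition uniformly_discrete :: "(real^'n) set \<Rightarrow> bool" where
  "uniformly_discrete S \<longleftrightarrow> (\<exists>r>0. \<forall>x R. R \<le> r \<longrightarrow>
      (\<forall>y\<in>supball x R \<inter> S. \<forall>z\<in>supball x R \<inter> S. y = z))"

definition delone :: "(real^'n) set \<Rightarrow> bool" where
  "delone S \<longleftrightarrow> relatively_dense S \<and> uniformly_discrete S"

definition upper_density :: "real \<Rightarrow> (real^'n) set \<Rightarrow> real" where
  "upper_density R G = (SUP x\<in>UNIV.
      real (card (supball x R \<inter> G)) / real (card (supball x R \<inter> Zn)))"

definition translate :: "(real^'n) set \<Rightarrow> real^'n \<Rightarrow> (real^'n) set" where
  "translate G v = (\<lambda>y. y + v) ` G"

definition symdiff :: "'a set \<Rightarrow> 'a set \<Rightarrow> 'a set" where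
  "symdiff A B = (A - B) \<union> (B - A)"

definition almost_periodic_pattern :: "(real^'n) set \<Rightarrow> bool" where
  "almost_periodic_pattern G \<longleftrightarrow> G \<subseteq> Zn \<and> delone G \<and>
     (\<forall>\<epsilon>>0. \<exists>R\<epsilon>>0. \<exists>N. N \<subseteq> Zn \<and> relatively_dense N \<and>
        (\<forall>R\<ge>R\<epsilon>. \<forall>v\<in>N. upper_density R (symdiff (translate G v) G) < \<epsilon>))"

definition rational_rows :: "real^'n^'n \<Rightarrow> 'n set" where
  "rational_rows A = {i. \<forall>j. A $ i $ j \<in> \<rat>}"

end

theory Submission imports Defs begin

lemma dinf_less: "dinf x y < R \<longleftrightarrow> (\<forall>i. \<bar>x$i - y$i\<bar> < R)"
  unfolding dinf_def by (subst Max_less_iff) auto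

lemma dinf_ge: "\<bar>x$i - y$i\<bar> \<le> dinf x y"
  unfolding dinf_def by (rule Max_ge) auto

lemma dinf_nonneg: "0 \<le> dinf x y"
  using dinf_ge[of x _ y] abs_ge_zero order_trans by blast

lemma dinf_shift: "dinf x (y + z) = dinf (x - z) y"
  unfolding dinf_def by (simp add: algebra_simps)

lemma finite_ball_Zn: "finite (supball x R \<inter> Zn)"
proof -
  let ?B = "PiE UNIV (\<lambda>i. {\<lfloor>x$i\<rfloor> - \<lceil>\<bar>R\<bar>\<rceil> - 1 .. \<lceil>x$i\<rceil> + \<lceil>\<bar>R\<bar>\<rceil> + 1})"
  have "supball x R \<inter> Zn \<subseteq> (\<lambda>f. \<chi> i. real_of_int (f i)) ` ?B"
  proof
    fix y assume y: "y \<in> supball x R \<inter> Zn"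
    hence d: "\<And>i. \<bar>x$i - y$i\<bar> < R" and z: "\<And>i. y$i \<in> \<int>"
      by (auto simp: supball_def dinf_less Zn_def)
    define f where "f = (\<lambda>i. \<lfloor>y$i\<rfloor>)"
    have fy: "\<And>i. real_of_int (f i) = y$i" using z unfolding f_def by (metis Ints_cases floor_of_int)
    have "f \<in> ?B"
    proof -
      have "\<And>i. f i \<in> {\<lfloor>x$i\<rfloor> - \<lceil>\<bar>R\<bar>\<rceil> - 1 .. \<lceil>x$i\<rceil> + \<lceil>\<bar>R\<bar>\<rceil> + 1}"
      proof -
        fix i
        have a: "\<bar>x$i - f i\<bar> < R" using d[of i] fy[of i] by simp
        have "real_of_int (\<lfloor>x$i\<rfloor> - \<lceil>\<bar>R\<bar>\<rceil> - 1) \<le> f i"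
          using a by (simp; linarith)
        moreover have "real_of_int (f i) \<le> \<lceil>x$i\<rceil> + \<lceil>\<bar>R\<bar>\<rceil> + 1"
          using a by (simp; linarith)
        ultimately show "f i \<in> {\<lfloor>x$i\<rfloor> - \<lceil>\<bar>R\<bar>\<rceil> - 1 .. \<lceil>x$i\<rceil> + \<lceil>\<bar>R\<bar>\<rceil> + 1}"
          by simp
      qed
      thus ?thesis by auto
    qed
    moreover have "y = (\<chi> i. real_of_int (f i))" using fy by (simp add: vec_eq_iff)
    ultimately show "y \<in> (\<lambda>f. \<chi> i. real_of_int (f i)) ` ?B" by blast
  qed
  moreover have "finite ?B" by (rule finite_PiE) auto
  ultimately show ?thesis by (meson finite_imageI finite_subset)
qed


definition ratio :: "real \<Rightarrow> (real^'n) set \<Rightarrow> real^'n \<Rightarrow> real" where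
  "ratio R S x = real (card (supball x R \<inter> S)) / real (card (supball x R \<inter> Zn))"

lemma ud_ratio: "upper_density R S = (SUP x. ratio R S x)"
  unfolding upper_density_def ratio_def by simp

lemma ratio_le1: assumes "S \<subseteq> Zn" shows "ratio R S x \<le> 1"
proof -
  have "card (supball x R \<inter> S) \<le> card (supball x R \<inter> Zn)"
    by (rule card_mono[OF finite_ball_Zn]) (use assms in auto)
  thus ?thesis unfolding ratio_def
    by (cases "card (supball x R \<inter> Zn) = 0") (auto simp: divide_le_eq_1)
qed

lemma bdd_ratio: "S \<subseteq> Zn \<Longrightarrow> bdd_above (range (ratio R S))"
  using ratio_le1 by (intro bdd_aboveI[of _ 1]) auto

lemma ud_mono: assumes "S \<subseteq> T" "T \<subseteq> Zn" shows "upper_density R S \<le> upper_density R T"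
  unfolding ud_ratio
proof (rule cSUP_mono)
  show "bdd_above (range (ratio R T))" by (rule bdd_ratio[OF assms(2)])
  fix x
  have "card (supball x R \<inter> S) \<le> card (supball x R \<inter> T)"
  proof (rule card_mono)
    show "finite (supball x R \<inter> T)"
      by (rule finite_subset[OF _ finite_ball_Zn[of x R]]) (use assms in auto)
  qed (use assms in auto)
  hence "ratio R S x \<le> ratio R T x" unfolding ratio_def by (simp add: divide_right_mono)
  thus "\<exists>m\<in>UNIV. ratio R S x \<le> ratio R T m" by blast
qed auto

lemma ud_union: assumes "S \<subseteq> Zn" "T \<subseteq> Zn"
  shows "upper_density R (S \<union> T) \<le> upper_density R S + upper_density R T"
  unfolding ud_ratio
proof (rule cSUP_least)
  fix x
  have "card (supball x R \<inter> (S \<union> T)) \<le> card (supball x R \<inter> S) + card (supball x R \<inter> T)"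
    by (metis Int_Un_distrib card_Un_le)
  hence "ratio R (S \<union> T) x \<le> ratio R S x + ratio R T x" unfolding ratio_def
    by (simp add: add_divide_distrib[symmetric] divide_right_mono)
  also have "\<dots> \<le> (SUP x. ratio R S x) + (SUP x. ratio R T x)"
    by (intro add_mono cSUP_upper bdd_ratio assms) auto
  finally show "ratio R (S \<union> T) x \<le> (SUP x. ratio R S x) + (SUP x. ratio R T x)" .
qed auto

lemma Zn_add: "a \<in> Zn \<Longrightarrow> b \<in> Zn \<Longrightarrow> a + b \<in> Zn"
  unfolding Zn_def by auto
lemma Zn_minus: "a \<in> Zn \<Longrightarrow> - a \<in> Zn"
  unfolding Zn_def by auto
lemma Zn_diff: "a \<in> Zn \<Longrightarrow> b \<in> Zn \<Longrightarrow> a - b \<in> Zn"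
  unfolding Zn_def by auto

lemma ud_translate: assumes z: "z \<in> Zn"
  shows "upper_density R (translate S z) = upper_density R S"
proof -
  have "ratio R (translate S z) x = ratio R S (x - z)" for x
  proof -
    have 1: "supball x R \<inter> translate S z = (\<lambda>y. y + z) ` (supball (x - z) R \<inter> S)"
      unfolding translate_def supball_def by (auto simp: dinf_shift)
    have 2: "supball x R \<inter> Zn = (\<lambda>y. y + z) ` (supball (x - z) R \<inter> Zn)"
    proof (rule set_eqI, rule iffI)
      fix y assume "y \<in> supball x R \<inter> Zn"
      hence "y - z \<in> supball (x - z) R \<inter> Zn" using Zn_diff[OF _ z, of y]
        unfolding supball_def by (auto simp: dinf_shift[symmetric])
      thus "y \<in> (\<lambda>y. y + z) ` (supball (x - z) R \<inter> Zn)" by (metis diff_add_cancel imageI)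
    next
      fix y assume "y \<in> (\<lambda>y. y + z) ` (supball (x - z) R \<inter> Zn)"
      thus "y \<in> supball x R \<inter> Zn" using Zn_add[OF _ z]
        unfolding supball_def by (auto simp: dinf_shift)
    qed
    show ?thesis unfolding ratio_def 1 2
      by (subst card_image, simp add: inj_on_def)+ simp
  qed
  hence "range (ratio R (translate S z)) = range (ratio R S)"
    by (auto simp: image_iff) (metis add_diff_cancel)
  thus ?thesis unfolding ud_ratio by simp
qed

lemma translate_Zn: "S \<subseteq> Zn \<Longrightarrow> z \<in> Zn \<Longrightarrow> translate S z \<subseteq> Zn"
  unfolding translate_def using Zn_add by auto


lemma symdiff_sub:
  "symdiff (translate G (v - w)) G \<subseteq>
     translate (symdiff (translate G v) G) (- w) \<union> translate (symdiff (translate G w) G) (- w)"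
proof
  fix y assume y: "y \<in> symdiff (translate G (v - w)) G"
  have t: "\<And>S u a. a \<in> translate S u \<longleftrightarrow> a - u \<in> S"
    unfolding translate_def by (auto simp: image_iff) (metis diff_add_cancel)
  show "y \<in> translate (symdiff (translate G v) G) (- w) \<union> translate (symdiff (translate G w) G) (- w)"
    using y by (auto simp: symdiff_def t algebra_simps)
qed

lemma key:
  assumes G: "G \<subseteq> Zn" and v: "v \<in> Zn" and w: "w \<in> Zn"
    and hv: "upper_density R (symdiff (translate G v) G) < e/2"
    and hw: "upper_density R (symdiff (translate G w) G) < e/2"
  shows "upper_density R (symdiff (translate G (v - w)) G) < e"
proof -
  have sd: "\<And>u. u \<in> Zn \<Longrightarrow> symdiff (translate G u) G \<subseteq> Zn"
    using translate_Zn[OF G] G unfolding symdiff_def by blast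
  have mw: "- w \<in> Zn" using Zn_minus[OF w] .
  have "upper_density R (symdiff (translate G (v - w)) G)
     \<le> upper_density R (translate (symdiff (translate G v) G) (- w) \<union> translate (symdiff (translate G w) G) (- w))"
    by (rule ud_mono[OF symdiff_sub]) (use translate_Zn[OF sd[OF v] mw] translate_Zn[OF sd[OF w] mw] in auto)
  also have "\<dots> \<le> upper_density R (translate (symdiff (translate G v) G) (- w)) + upper_density R (translate (symdiff (translate G w) G) (- w))"
    by (rule ud_union) (use translate_Zn[OF sd[OF v] mw] translate_Zn[OF sd[OF w] mw] in auto)
  also have "\<dots> = upper_density R (symdiff (translate G v) G) + upper_density R (symdiff (translate G w) G)"
    using ud_translate[OF mw] by simp
  also have "\<dots> < e" using hv hw by simp
  finally show ?thesis .
qed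

lemma floor_close:
  assumes "\<lfloor>x * M\<rfloor> = \<lfloor>y * M\<rfloor>" "(M::real) > 0"
  shows "\<bar>x - y\<bar> < 1 / M"
proof -
  have "\<bar>x * M - y * M\<bar> < 1"
  proof -
    define k where "k = real_of_int \<lfloor>x*M\<rfloor>"
    have "k \<le> x*M" "x*M < k + 1" unfolding k_def by linarith+
    moreover have "k \<le> y*M" "y*M < k + 1" unfolding k_def assms(1) by linarith+
    ultimately show ?thesis by (simp add: abs_less_iff)
  qed
  hence "\<bar>x - y\<bar> * M < 1" using assms(2) by (simp add: abs_mult left_diff_distrib[symmetric])
  thus ?thesis using assms(2) by (simp add: field_simps)
qed

lemma rat_denom: "r \<in> \<rat> \<Longrightarrow> \<exists>d::int. d > 0 \<and> of_int d * r \<in> \<int>"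
proof -
  assume "r \<in> \<rat>"
  then obtain a b where "b > 0" "r = of_int a / of_int b" by (rule Rats_cases') 
  thus ?thesis by (intro exI[of _ b]) auto
qed


theorem lemmaB3:
  fixes G :: "(real^'n) set" and A :: "real^'n^'n" and \<epsilon> \<delta> :: real
  assumes "almost_periodic_pattern G" and "\<epsilon> > 0" and "\<delta> > 0" and "invertible A"
  shows "\<exists>R>0. \<exists>N. N \<subseteq> Zn \<and> relatively_dense N \<and>
           (\<forall>R'\<ge>R. \<forall>v\<in>N. upper_density R' (symdiff (translate G v) G) < \<epsilon>) \<and>
           (\<forall>v\<in>N. dinf_set (A *v v) Zn < \<delta>) \<and>
           (\<forall>i\<in>rational_rows A. \<forall>v\<in>N. (A *v v) $ i \<in> \<int>)"
proof -
  have GZ: "G \<subseteq> Zn" using assms(1) unfolding almost_periodic_pattern_def by blast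
  obtain R0 N where R0: "R0 > 0" and NZ: "N \<subseteq> Zn" and Nrd: "relatively_dense N"
    and P: "\<And>R v. R \<ge> R0 \<Longrightarrow> v \<in> N \<Longrightarrow> upper_density R (symdiff (translate G v) G) < \<epsilon>/2"
    using assms(1) assms(2) unfolding almost_periodic_pattern_def
    by (metis half_gt_zero)
  obtain Rd where Rd: "Rd > 0" and Rdp: "\<And>x R. R \<ge> Rd \<Longrightarrow> supball x R \<inter> N \<noteq> {}"
    using Nrd unfolding relatively_dense_def by blast
  define M :: nat where "M = nat \<lceil>1/\<delta>\<rceil> + 1"
  have Mpos: "real M > 0" unfolding M_def by simp
  have Md: "1 / real M < \<delta>"
  proof -
    have "1/\<delta> < real M" unfolding M_def by linarith
    thus ?thesis using assms(3) Mpos by (simp add: field_simps)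
  qed
  define d :: "'n \<Rightarrow> 'n \<Rightarrow> int" where
    "d i j = (if A$i$j \<in> \<rat> then (SOME d. d > 0 \<and> of_int d * A$i$j \<in> \<int>) else 1)" for i j
  have d: "d i j > 0 \<and> (A$i$j \<in> \<rat> \<longrightarrow> of_int (d i j) * A$i$j \<in> \<int>)" for i j
  proof (cases "A$i$j \<in> \<rat>")
    case True
    from someI_ex[OF rat_denom[OF True]] show ?thesis using True unfolding d_def by simp
  qed (simp add: d_def)
  define q :: int where "q = (\<Prod>p\<in>UNIV. d (fst p) (snd p))"
  have qpos: "q > 0" unfolding q_def using d by (intro prod_pos) auto
  have qA: "of_int q * A$i$j \<in> \<int>" if "A$i$j \<in> \<rat>" for i j
  proof -
    have "q = d i j * (\<Prod>p\<in>UNIV - {(i,j)}. d (fst p) (snd p))"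
      unfolding q_def by (subst prod.remove[of _ "(i,j)"]) auto
    hence eq: "of_int q * A$i$j = (of_int (d i j) * A$i$j) * of_int (\<Prod>p\<in>UNIV - {(i,j)}. d (fst p) (snd p))"
      by simp
    have "(of_int (d i j) * A$i$j) * of_int (\<Prod>p\<in>UNIV - {(i,j)}. d (fst p) (snd p)) \<in> \<int>"
      using d[of i j] that by (intro Ints_mult[OF _ Ints_of_int]) auto
    thus ?thesis by (metis eq)
  qed
  define \<kappa> where "\<kappa> v = ((\<lambda>i. \<lfloor>frac ((A *v v)$i) * real M\<rfloor>), (\<lambda>j. \<lfloor>v$j\<rfloor> mod q))" for v
  define rep where "rep c = (SOME w. w \<in> N \<and> \<kappa> w = c)" for c
  have rep: "rep (\<kappa> v) \<in> N \<and> \<kappa> (rep (\<kappa> v)) = \<kappa> v" if "v \<in> N" for v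
    unfolding rep_def by (rule someI[of _ v]) (use that in auto)
  have fin: "finite (\<kappa> ` N)"
  proof (rule finite_subset)
    show "\<kappa> ` N \<subseteq> PiE (UNIV::'n set) (\<lambda>_. {0..int M}) \<times> PiE (UNIV::'n set) (\<lambda>_. {0..q-1})"
    proof
      fix c assume "c \<in> \<kappa> ` N"
      then obtain v where c: "c = \<kappa> v" by blast
      have "\<lfloor>frac ((A *v v)$i) * real M\<rfloor> \<in> {0..int M}" for i
      proof -
        have "0 \<le> frac ((A *v v)$i)" "frac ((A *v v)$i) < 1" by (simp_all add: frac_lt_1)
        hence "0 \<le> frac ((A *v v)$i) * real M" "frac ((A *v v)$i) * real M \<le> real M"
          using Mpos by (simp_all add: mult_left_le_one_le)
        thus ?thesis by (simp add: le_floor_iff floor_le_iff)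
      qed
      moreover have "\<lfloor>v$j\<rfloor> mod q \<in> {0..q-1}" for j using qpos by simp
      ultimately show "c \<in> PiE (UNIV::'n set) (\<lambda>_. {0..int M}) \<times> PiE (UNIV::'n set) (\<lambda>_. {0..q-1})"
        unfolding c \<kappa>_def by auto
    qed
    show "finite (PiE (UNIV::'n set) (\<lambda>_. {0..int M}) \<times> PiE (UNIV::'n set) (\<lambda>_. {0..q-1}))"
      by (intro finite_cartesian_product finite_PiE) auto
  qed
  define W where "W = (\<Sum>c\<in>\<kappa> ` N. \<Sum>i\<in>UNIV. \<bar>rep c $ i\<bar>)"
  have Wb: "\<bar>rep (\<kappa> v) $ i\<bar> \<le> W" if "v \<in> N" for v i
  proof -
    have "\<bar>rep (\<kappa> v) $ i\<bar> \<le> (\<Sum>i\<in>UNIV. \<bar>rep (\<kappa> v) $ i\<bar>)"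
      by (rule member_le_sum) auto
    also have "\<dots> \<le> W" unfolding W_def
      by (rule member_le_sum[of "\<kappa> v"]) (use that fin in \<open>auto intro: sum_nonneg\<close>)
    finally show ?thesis .
  qed
  have W0: "W \<ge> 0" unfolding W_def by (intro sum_nonneg) auto
  define N' where "N' = (\<lambda>v. v - rep (\<kappa> v)) ` N"
  show ?thesis
  proof (intro exI[of _ R0] exI[of _ N'] conjI R0 ballI allI impI)
    show "N' \<subseteq> Zn" unfolding N'_def using NZ rep Zn_diff by blast
    show "relatively_dense N'" unfolding relatively_dense_def
    proof (intro exI[of _ "Rd + W + 1"] conjI allI impI)
      show "Rd + W + 1 > 0" using Rd W0 by simp
      fix x R assume R: "Rd + W + 1 \<le> R"
      obtain v where v: "v \<in> supball x Rd" "v \<in> N" using Rdp[of Rd x] by auto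
      have "dinf x (v - rep (\<kappa> v)) < R" unfolding dinf_less
      proof
        fix i
        have "\<bar>x$i - v$i\<bar> < Rd" using v(1) unfolding supball_def dinf_less by blast
        moreover have "\<bar>rep (\<kappa> v) $ i\<bar> \<le> W" using Wb[OF v(2)] .
        ultimately show "\<bar>x$i - (v - rep (\<kappa> v))$i\<bar> < R" using R by simp
      qed
      thus "supball x R \<inter> N' \<noteq> {}" unfolding supball_def N'_def using v(2) by blast
    qed
  next
    fix R' u assume R': "R0 \<le> R'" and u: "u \<in> N'"
    then obtain v where v: "v \<in> N" and uv: "u = v - rep (\<kappa> v)" unfolding N'_def by blast
    show "upper_density R' (symdiff (translate G u) G) < \<epsilon>" unfolding uv
      by (rule key[OF GZ]) (use v rep NZ P R' in auto)
  next
    fix u assume u: "u \<in> N'"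
    then obtain v where v: "v \<in> N" and uv: "u = v - rep (\<kappa> v)" unfolding N'_def by blast
    define w where "w = rep (\<kappa> v)"
    have kw: "\<kappa> w = \<kappa> v" and wN: "w \<in> N" using rep[OF v] unfolding w_def by auto
    have Au: "A *v u = A *v v - A *v w" unfolding uv w_def by (simp add: matrix_vector_mult_diff_distrib)
    define z :: "real^'n" where "z = (\<chi> i. of_int (\<lfloor>(A *v v)$i\<rfloor> - \<lfloor>(A *v w)$i\<rfloor>))"
    have zZ: "z \<in> Zn" unfolding z_def Zn_def by simp
    have "dinf (A *v u) z < 1 / real M" unfolding dinf_less
    proof
      fix i
      have "\<lfloor>frac ((A *v v)$i) * real M\<rfloor> = \<lfloor>frac ((A *v w)$i) * real M\<rfloor>"
        using kw unfolding \<kappa>_def by (metis prod.inject)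
      from floor_close[OF this Mpos]
      show "\<bar>(A *v u)$i - z$i\<bar> < 1 / real M"
        unfolding Au z_def by (simp add: frac_def algebra_simps)
    qed
    moreover have "dinf_set (A *v u) Zn \<le> dinf (A *v u) z"
      unfolding dinf_set_def by (rule cINF_lower[OF _ zZ]) (auto intro: bdd_belowI[of _ 0] dinf_nonneg)
    ultimately show "dinf_set (A *v u) Zn < \<delta>" using Md by linarith
  next
    fix i u assume i: "i \<in> rational_rows A" and u: "u \<in> N'"
    then obtain v where v: "v \<in> N" and uv: "u = v - rep (\<kappa> v)" unfolding N'_def by blast
    define w where "w = rep (\<kappa> v)"
    have kw: "\<kappa> w = \<kappa> v" and wN: "w \<in> N" using rep[OF v] unfolding w_def by auto
    have uj: "\<exists>k. u$j = of_int (q * k)" for j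
    proof -
      have "\<lfloor>w$j\<rfloor> mod q = \<lfloor>v$j\<rfloor> mod q" using kw unfolding \<kappa>_def by (metis prod.inject)
      hence "q dvd \<lfloor>v$j\<rfloor> - \<lfloor>w$j\<rfloor>" by (metis mod_eq_dvd_iff)
      then obtain k where k: "\<lfloor>v$j\<rfloor> - \<lfloor>w$j\<rfloor> = q * k" by blast
      have "v$j \<in> \<int>" "w$j \<in> \<int>" using v wN NZ unfolding Zn_def by auto
      hence "u$j = of_int (\<lfloor>v$j\<rfloor> - \<lfloor>w$j\<rfloor>)" unfolding uv w_def[symmetric]
        by (metis Ints_cases floor_of_int of_int_diff vector_minus_component)
      thus ?thesis using k by metis
    qed
    have "(A *v u)$i = (\<Sum>j\<in>UNIV. A$i$j * u$j)" by (simp add: matrix_vector_mult_def)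
    also have "\<dots> \<in> \<int>"
    proof (rule Ints_sum)
      fix j
      obtain k where k: "u$j = of_int (q * k)" using uj by blast
      have "A$i$j \<in> \<rat>" using i unfolding rational_rows_def by blast
      hence "(of_int q * A$i$j) * of_int k \<in> \<int>" using qA by (simp add: Ints_mult)
      thus "A$i$j * u$j \<in> \<int>" unfolding k by (simp add: algebra_simps)
    qed
    finally show "(A *v u)$i \<in> \<int>" .
  qed
qed

end
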